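(* Consider the constrained perfect SEIR model described in the context. Along any barrier integral curve $(S,E,I)$ of the admissible set, with nonzero absolutely continuous adjoint $\lambda=(\lambda_1,\lambda_2,\lambda_3)^T$ satisfying $\dot\lambda=\begin{pmatrix}\beta I & -\beta I & 0\\ 0 & \eta & -\eta\\ \beta S & -\beta S & \gamma\end{pmatrix}\lambda$, $\lambda(\bar t)=(0,0,1)^T$, and inputs given by $\bar\beta(t)=\beta_{\max}$ if $\lambda_2-\lambda_1<0$, $\beta_{\min}$ if $\lambda_2-\lambda_1>0$ (arbitrary if $=0$), and $\bar\gamma(t)=\gamma_{\max}$ if $\lambda_3>0$, $\gamma_{\min}$ if $\lambda_3<0$ (arbitrary if $=0$), and whose endpoint $z=(z_1,z_2,z_3)=(S(\bar t),E(\bar t),I(\bar t))$ in the tangent set $\mathcal{T}_{\mathcal{A}}=\{(z_1,z_2,z_3):0\le z_1\le 1-z_2-z_3,\ z_2=\frac{\gamma_{\max}}{\eta}I_{\max},\ z_3=I_{\max}\}$ satisfies $z_1\neq0$, the inputs $\bar\beta$ and $\bar\gamma$ only switch at isolated points in time (i.e. neither $\lambda_2-\lambda_1$ nor $\lambda_3$ vanishes identically on any nonempty open time interval).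
   Context: Perfect SEIR model: fix $\eta>0$, $0<\beta_{\min}\le\beta_{\max}$, $0<\gamma_{\min}\le\gamma_{\max}$, $I_{\max}\in(0,1]$. State $x=(S,E,I)\in\mathbb{R}^3$, inputs Lebesgue measurable $\beta:[t_0,\infty[\to[\beta_{\min},\beta_{\max}]$, $\gamma:[t_0,\infty[\to[\gamma_{\min},\gamma_{\max}]$, dynamics $\dot S=-\beta SI$, $\dot E=\beta SI-\eta E$, $\dot I=\eta E-\gamma I$, written $\dot x=f(x,(\beta,\gamma))$, with constraint $g(x)=I-I_{\max}\le0$. The displayed adjoint equation is $\dot\lambda=-(\partial f/\partial x)^T\lambda$; the input rules come from minimizing the Hamiltonian $\lambda^Tf$ over the input box. A barrier integral curve of the admissible set is a trajectory reaching $\{I=I_{\max}\}$ tangentially at time $\bar t$ whose inputs and adjoint satisfy these conditions. *)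

theory Defs
  imports "HOL-Analysis.Analysis"
begin

definition abs_cont_on :: "real set \<Rightarrow> (real \<Rightarrow> real) \<Rightarrow> bool" where
  "abs_cont_on D f \<longleftrightarrow>
     (\<forall>\<epsilon>>0. \<exists>\<delta>>0. \<forall>(n::nat) (a::nat \<Rightarrow> real) b.
        (\<forall>i<n. a i \<le> b i \<and> a i \<in> D \<and> b i \<in> D) \<and>
        (\<forall>i<n. \<forall>j<n. i \<noteq> j \<longrightarrow> {a i<..<b i} \<inter> {a j<..<b j} = {}) \<and>
        (\<Sum>i<n. b i - a i) < \<delta>
        \<longrightarrow> (\<Sum>i<n. \<bar>f (b i) - f (a i)\<bar>) < \<epsilon>)"

definition tangent_set :: "real \<Rightarrow> real \<Rightarrow> real \<Rightarrow> (real \<times> real \<times> real) set" where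
  "tangent_set \<eta> \<gamma>max Imax =
     {(z1, z2, z3). 0 \<le> z1 \<and> z1 \<le> 1 - z2 - z3 \<and> z2 = \<gamma>max / \<eta> * Imax \<and> z3 = Imax}"

end

theory Submission
  imports Defs
begin

lemma ac_subset: "abs_cont_on D f \<Longrightarrow> E \<subseteq> D \<Longrightarrow> abs_cont_on E f"
  unfolding abs_cont_on_def by (meson subsetD)

lemma acD:
  assumes "abs_cont_on D f" "e > 0"
  obtains d where "d > 0" "\<And>(n::nat) (a::nat \<Rightarrow> real) b.
        \<forall>i<n. a i \<le> b i \<and> a i \<in> D \<and> b i \<in> D \<Longrightarrow>
        \<forall>i<n. \<forall>j<n. i \<noteq> j \<longrightarrow> {a i<..<b i} \<inter> {a j<..<b j} = {} \<Longrightarrow>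
        (\<Sum>i<n. b i - a i) < d
        \<Longrightarrow> (\<Sum>i<n. \<bar>f (b i) - f (a i)\<bar>) < e"
proof -
  from assms obtain d where "d > 0" and H: "\<forall>(n::nat) (a::nat \<Rightarrow> real) b.
        (\<forall>i<n. a i \<le> b i \<and> a i \<in> D \<and> b i \<in> D) \<and>
        (\<forall>i<n. \<forall>j<n. i \<noteq> j \<longrightarrow> {a i<..<b i} \<inter> {a j<..<b j} = {}) \<and>
        (\<Sum>i<n. b i - a i) < d
        \<longrightarrow> (\<Sum>i<n. \<bar>f (b i) - f (a i)\<bar>) < e"
    unfolding abs_cont_on_def by auto
  show ?thesis
    by (rule that[OF \<open>d > 0\<close>]) (use H in blast)
qed

lemma ac_cont:
  assumes "abs_cont_on D f" shows "continuous_on D f"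
  unfolding continuous_on_iff
proof (intro ballI allI impI)
  fix x e assume x: "x \<in> D" and e: "(0::real) < e"
  obtain d where d: "d > 0" and H: "\<And>(n::nat) (a::nat \<Rightarrow> real) b.
        \<forall>i<n. a i \<le> b i \<and> a i \<in> D \<and> b i \<in> D \<Longrightarrow>
        \<forall>i<n. \<forall>j<n. i \<noteq> j \<longrightarrow> {a i<..<b i} \<inter> {a j<..<b j} = {} \<Longrightarrow>
        (\<Sum>i<n. b i - a i) < d
        \<Longrightarrow> (\<Sum>i<n. \<bar>f (b i) - f (a i)\<bar>) < e"
    by (rule acD[OF assms e]) blast
  show "\<exists>d>0. \<forall>x'\<in>D. dist x' x < d \<longrightarrow> dist (f x') (f x) < e"
  proof (intro exI[of _ d] conjI ballI impI d)
    fix y assume y: "y \<in> D" and dy: "dist y x < d"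
    have "(\<Sum>i<(1::nat). \<bar>f (max x y) - f (min x y)\<bar>) < e"
      by (rule H[of 1 "\<lambda>_. min x y" "\<lambda>_. max x y"]) (use x y dy in \<open>auto simp: dist_real_def min_def max_def\<close>)
    then show "dist (f y) (f x) < e"
      by (cases "x \<le> y") (auto simp: dist_real_def abs_minus_commute max_def min_def)
  qed
qed

lemma ac_lip:
  assumes "\<And>x y. x \<in> D \<Longrightarrow> y \<in> D \<Longrightarrow> \<bar>f y - f x\<bar> \<le> L * \<bar>y - x\<bar>"
  shows "abs_cont_on D f"
  unfolding abs_cont_on_def
proof (intro allI impI)
  fix e :: real assume e: "e > 0"
  define L' where "L' = \<bar>L\<bar> + 1"
  have L': "L' > 0" unfolding L'_def by simp
  show "\<exists>\<delta>>0. \<forall>(n::nat) (a::nat \<Rightarrow> real) b.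
        (\<forall>i<n. a i \<le> b i \<and> a i \<in> D \<and> b i \<in> D) \<and>
        (\<forall>i<n. \<forall>j<n. i \<noteq> j \<longrightarrow> {a i<..<b i} \<inter> {a j<..<b j} = {}) \<and>
        (\<Sum>i<n. b i - a i) < \<delta>
        \<longrightarrow> (\<Sum>i<n. \<bar>f (b i) - f (a i)\<bar>) < e"
  proof (intro exI[of _ "e / L'"] conjI allI impI)
    show "e / L' > 0" using e L' by simp
    fix n :: nat and a b :: "nat \<Rightarrow> real"
    assume H: "(\<forall>i<n. a i \<le> b i \<and> a i \<in> D \<and> b i \<in> D) \<and>
        (\<forall>i<n. \<forall>j<n. i \<noteq> j \<longrightarrow> {a i<..<b i} \<inter> {a j<..<b j} = {}) \<and>
        (\<Sum>i<n. b i - a i) < e / L'"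
    have "(\<Sum>i<n. \<bar>f (b i) - f (a i)\<bar>) \<le> (\<Sum>i<n. L' * (b i - a i))"
    proof (rule sum_mono)
      fix i assume "i \<in> {..<n}"
      then have "a i \<le> b i" "a i \<in> D" "b i \<in> D" using H by auto
      then have "\<bar>f (b i) - f (a i)\<bar> \<le> L * (b i - a i)" using assms by fastforce
      also have "\<dots> \<le> L' * (b i - a i)" unfolding L'_def using \<open>a i \<le> b i\<close>
        by (intro mult_right_mono) auto
      finally show "\<bar>f (b i) - f (a i)\<bar> \<le> L' * (b i - a i)" .
    qed
    also have "\<dots> = L' * (\<Sum>i<n. b i - a i)" by (simp add: sum_distrib_left)
    also have "\<dots> < L' * (e / L')" using H L' by (intro mult_strict_left_mono) auto
    also have "\<dots> = e" using L' by simp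
    finally show "(\<Sum>i<n. \<bar>f (b i) - f (a i)\<bar>) < e" .
  qed
qed

lemma ac_const: "abs_cont_on D (\<lambda>_. c)"
  by (rule ac_lip[where L=0]) simp

lemma ac_comb:
  assumes f: "abs_cont_on D f" and g: "abs_cont_on D g" and M: "M > 0"
    and bd: "\<And>x y. x \<in> D \<Longrightarrow> y \<in> D \<Longrightarrow> \<bar>h y - h x\<bar> \<le> M * (\<bar>f y - f x\<bar> + \<bar>g y - g x\<bar>)"
  shows "abs_cont_on D h"
  unfolding abs_cont_on_def
proof (intro allI impI)
  fix e :: real assume e: "e > 0"
  have e2: "e / (2 * M) > 0" using e M by simp
  obtain d1 where d1: "d1 > 0" and H1: "\<And>(n::nat) (a::nat \<Rightarrow> real) b.
        \<forall>i<n. a i \<le> b i \<and> a i \<in> D \<and> b i \<in> D \<Longrightarrow>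
        \<forall>i<n. \<forall>j<n. i \<noteq> j \<longrightarrow> {a i<..<b i} \<inter> {a j<..<b j} = {} \<Longrightarrow>
        (\<Sum>i<n. b i - a i) < d1
        \<Longrightarrow> (\<Sum>i<n. \<bar>f (b i) - f (a i)\<bar>) < e / (2 * M)"
    by (rule acD[OF f e2]) blast
  obtain d2 where d2: "d2 > 0" and H2: "\<And>(n::nat) (a::nat \<Rightarrow> real) b.
        \<forall>i<n. a i \<le> b i \<and> a i \<in> D \<and> b i \<in> D \<Longrightarrow>
        \<forall>i<n. \<forall>j<n. i \<noteq> j \<longrightarrow> {a i<..<b i} \<inter> {a j<..<b j} = {} \<Longrightarrow>
        (\<Sum>i<n. b i - a i) < d2
        \<Longrightarrow> (\<Sum>i<n. \<bar>g (b i) - g (a i)\<bar>) < e / (2 * M)"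
    by (rule acD[OF g e2]) blast
  show "\<exists>\<delta>>0. \<forall>(n::nat) (a::nat \<Rightarrow> real) b.
        (\<forall>i<n. a i \<le> b i \<and> a i \<in> D \<and> b i \<in> D) \<and>
        (\<forall>i<n. \<forall>j<n. i \<noteq> j \<longrightarrow> {a i<..<b i} \<inter> {a j<..<b j} = {}) \<and>
        (\<Sum>i<n. b i - a i) < \<delta>
        \<longrightarrow> (\<Sum>i<n. \<bar>h (b i) - h (a i)\<bar>) < e"
  proof (intro exI[of _ "min d1 d2"] conjI allI impI)
    show "min d1 d2 > 0" using d1 d2 by simp
    fix n :: nat and a b :: "nat \<Rightarrow> real"
    assume H: "(\<forall>i<n. a i \<le> b i \<and> a i \<in> D \<and> b i \<in> D) \<and>
        (\<forall>i<n. \<forall>j<n. i \<noteq> j \<longrightarrow> {a i<..<b i} \<inter> {a j<..<b j} = {}) \<and>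
        (\<Sum>i<n. b i - a i) < min d1 d2"
    have s1: "(\<Sum>i<n. \<bar>f (b i) - f (a i)\<bar>) < e / (2 * M)" using H by (intro H1) auto
    have s2: "(\<Sum>i<n. \<bar>g (b i) - g (a i)\<bar>) < e / (2 * M)" using H by (intro H2) auto
    have "(\<Sum>i<n. \<bar>h (b i) - h (a i)\<bar>) \<le> (\<Sum>i<n. M * (\<bar>f (b i) - f (a i)\<bar> + \<bar>g (b i) - g (a i)\<bar>))"
      using H by (intro sum_mono bd) auto
    also have "\<dots> = M * ((\<Sum>i<n. \<bar>f (b i) - f (a i)\<bar>) + (\<Sum>i<n. \<bar>g (b i) - g (a i)\<bar>))"
      by (simp add: sum_distrib_left sum.distrib distrib_left)
    also have "\<dots> < M * (e / (2 * M) + e / (2 * M))"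
      using s1 s2 M by (intro mult_strict_left_mono) auto
    also have "\<dots> = e" using M by (simp add: field_simps)
    finally show "(\<Sum>i<n. \<bar>h (b i) - h (a i)\<bar>) < e" .
  qed
qed

lemma ac_add:
  assumes "abs_cont_on D f" "abs_cont_on D g"
  shows "abs_cont_on D (\<lambda>t. f t + g t)"
  by (rule ac_comb[OF assms, where M=1]) auto

lemma ac_bounded:
  assumes "abs_cont_on D f" "compact D"
  obtains M where "M > 0" "\<And>x. x \<in> D \<Longrightarrow> \<bar>f x\<bar> \<le> M"
proof -
  have "compact (f ` D)" using assms ac_cont compact_continuous_image by blast
  then obtain M where M: "M > 0" "\<forall>y\<in>f ` D. norm y \<le> M"
    using compact_imp_bounded[of "f ` D"] bounded_pos[of "f ` D"] by blast
  show ?thesis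
  proof (rule that[of M])
    show "M > 0" by (rule M(1))
    fix x assume "x \<in> D"
    then have "norm (f x) \<le> M" using M(2) by blast
    then show "\<bar>f x\<bar> \<le> M" by simp
  qed
qed

lemma ac_mult:
  assumes f: "abs_cont_on D f" and g: "abs_cont_on D g" and D: "compact D"
  shows "abs_cont_on D (\<lambda>t. f t * g t)"
proof -
  obtain M1 where M1: "M1 > 0" "\<And>x. x \<in> D \<Longrightarrow> \<bar>f x\<bar> \<le> M1" using ac_bounded f D by metis
  obtain M2 where M2: "M2 > 0" "\<And>x. x \<in> D \<Longrightarrow> \<bar>g x\<bar> \<le> M2" using ac_bounded g D by metis
  show ?thesis
  proof (rule ac_comb[OF f g, where M="M1 + M2"])
    show "M1 + M2 > 0" using M1 M2 by simp
    fix x y assume x: "x \<in> D" and y: "y \<in> D"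
    have "f y * g y - f x * g x = f y * (g y - g x) + g x * (f y - f x)" by (simp add: algebra_simps)
    then have "\<bar>f y * g y - f x * g x\<bar> = \<bar>f y * (g y - g x) + g x * (f y - f x)\<bar>" by simp
    also have "\<dots> \<le> \<bar>f y * (g y - g x)\<bar> + \<bar>g x * (f y - f x)\<bar>" by (rule abs_triangle_ineq)
    also have "\<dots> = \<bar>f y\<bar> * \<bar>g y - g x\<bar> + \<bar>g x\<bar> * \<bar>f y - f x\<bar>" by (simp add: abs_mult)
    also have "\<dots> \<le> (M1 + M2) * \<bar>g y - g x\<bar> + (M1 + M2) * \<bar>f y - f x\<bar>"
      using M1(2)[OF y] M2(2)[OF x] M1(1) M2(1)
      by (intro add_mono mult_right_mono) auto
    finally show "\<bar>f y * g y - f x * g x\<bar> \<le> (M1 + M2) * (\<bar>f y - f x\<bar> + \<bar>g y - g x\<bar>)"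
      by (simp add: algebra_simps)
  qed
qed

lemma ac_mono:
  fixes g :: "real \<Rightarrow> real"
  assumes cd: "c \<le> d" and ac: "abs_cont_on {c..d} g"
    and ae: "AE t in lebesgue. t \<in> {c..d} \<longrightarrow>
      (\<exists>D. (g has_real_derivative D) (at t within {c..d}) \<and> D \<le> 0)"
  shows "g d \<le> g c"
proof -
  have key: "g d - g c \<le> e * (d - c) + e" if e: "e > 0" for e
  proof -
    obtain \<delta> where \<delta>: "\<delta> > 0" and Hac: "\<And>(n::nat) (a::nat \<Rightarrow> real) b.
        \<forall>i<n. a i \<le> b i \<and> a i \<in> {c..d} \<and> b i \<in> {c..d} \<Longrightarrow>
        \<forall>i<n. \<forall>j<n. i \<noteq> j \<longrightarrow> {a i<..<b i} \<inter> {a j<..<b j} = {} \<Longrightarrow>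
        (\<Sum>i<n. b i - a i) < \<delta>
        \<Longrightarrow> (\<Sum>i<n. \<bar>g (b i) - g (a i)\<bar>) < e"
      by (rule acD[OF ac e]) blast
    from ae obtain N where N: "{t \<in> space lebesgue. \<not> (t \<in> {c..d} \<longrightarrow>
      (\<exists>D. (g has_real_derivative D) (at t within {c..d}) \<and> D \<le> 0))} \<subseteq> N"
      "emeasure lebesgue N = 0" "N \<in> sets lebesgue"
      by (rule AE_E)
    obtain G where G: "open G" "N \<subseteq> G" "(G - N) \<in> lmeasurable" "emeasure lebesgue (G - N) < ennreal \<delta>"
      by (rule sets_lebesgue_outer_open[OF N(3) \<delta>])
    have Gs: "G \<in> sets lebesgue" using G(1) by simp
    have "emeasure lebesgue G \<le> emeasure lebesgue (N \<union> (G - N))"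
      using G(2) by (simp add: Un_absorb1)
    also have "\<dots> \<le> emeasure lebesgue N + emeasure lebesgue (G - N)"
      by (rule emeasure_subadditive) (use N(3) G(3) in auto)
    also have "\<dots> < ennreal \<delta>" using N(2) G(4) by simp
    finally have GE: "emeasure lebesgue G < ennreal \<delta>" .
    then have Gf: "G \<in> fmeasurable lebesgue" using Gs
      by (auto simp: fmeasurable_def less_top[symmetric] intro: order.strict_trans)
    have Gm: "measure lebesgue G < \<delta>"
      using GE Gf \<delta> by (simp add: emeasure_eq_measure2 ennreal_less_iff)
    have good: "\<exists>D. (g has_real_derivative D) (at t within {c..d}) \<and> D \<le> 0"
      if "t \<in> {c..d}" "t \<notin> G" for t
      using N(1) G(2) that by auto
    have "\<forall>t. \<exists>r>0. (t \<in> G \<longrightarrow> ball t r \<subseteq> G) \<and>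
      (t \<in> {c..d} \<and> t \<notin> G \<longrightarrow> (\<forall>y\<in>{c..d}. \<bar>y - t\<bar> < r \<longrightarrow>
         (t \<le> y \<longrightarrow> g y - g t \<le> e * (y - t)) \<and> (y \<le> t \<longrightarrow> g t - g y \<le> e * (t - y))))"
    proof
      fix t
      show "\<exists>r>0. (t \<in> G \<longrightarrow> ball t r \<subseteq> G) \<and>
      (t \<in> {c..d} \<and> t \<notin> G \<longrightarrow> (\<forall>y\<in>{c..d}. \<bar>y - t\<bar> < r \<longrightarrow>
         (t \<le> y \<longrightarrow> g y - g t \<le> e * (y - t)) \<and> (y \<le> t \<longrightarrow> g t - g y \<le> e * (t - y))))"
      proof (cases "t \<in> G")
        case True
        then obtain r where "r > 0" "ball t r \<subseteq> G" using G(1) open_contains_ball by blast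
        then show ?thesis using True by blast
      next
        case False
        show ?thesis
        proof (cases "t \<in> {c..d}")
          case False
          then show ?thesis using \<open>t \<notin> G\<close> by (intro exI[of _ 1]) auto
        next
          case True
          obtain D where D: "(g has_real_derivative D) (at t within {c..d})" "D \<le> 0"
            using good[OF True \<open>t \<notin> G\<close>] by blast
          then have "(g has_derivative (\<lambda>h. D * h)) (at t within {c..d})"
            by (simp add: has_field_derivative_def)
          then obtain r where r: "r > 0" and hr: "\<forall>y\<in>{c..d}. norm (y - t) < r \<longrightarrow>
              norm (g y - g t - D * (y - t)) \<le> e * norm (y - t)"
            using e unfolding has_derivative_within_alt by blast
          have "\<forall>y\<in>{c..d}. \<bar>y - t\<bar> < r \<longrightarrow>
              (t \<le> y \<longrightarrow> g y - g t \<le> e * (y - t)) \<and> (y \<le> t \<longrightarrow> g t - g y \<le> e * (t - y))"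
          proof (intro ballI impI conjI)
            fix y assume y: "y \<in> {c..d}" "\<bar>y - t\<bar> < r"
            have A: "\<bar>g y - g t - D * (y - t)\<bar> \<le> e * \<bar>y - t\<bar>" using hr y by auto
            { assume "t \<le> y"
              then have "D * (y - t) \<le> 0" using D(2) by (simp add: mult_nonpos_nonneg)
              then show "g y - g t \<le> e * (y - t)" using A \<open>t \<le> y\<close> by (simp add: abs_le_iff)
            }
            { assume "y \<le> t"
              then have "D * (y - t) \<ge> 0" using D(2) by (simp add: mult_nonpos_nonpos)
              moreover have "\<bar>y - t\<bar> = t - y" using \<open>y \<le> t\<close> by simp
              ultimately show "g t - g y \<le> e * (t - y)" using A by (simp add: abs_le_iff)
            }
          qed
          then show ?thesis using r \<open>t \<notin> G\<close> by blast
        qed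
      qed
    qed
    then obtain r where r: "\<And>t. r t > 0"
      and rG: "\<And>t. t \<in> G \<Longrightarrow> ball t (r t) \<subseteq> G"
      and rD: "\<And>t y. t \<in> {c..d} \<Longrightarrow> t \<notin> G \<Longrightarrow> y \<in> {c..d} \<Longrightarrow> \<bar>y - t\<bar> < r t \<Longrightarrow>
          (t \<le> y \<longrightarrow> g y - g t \<le> e * (y - t)) \<and> (y \<le> t \<longrightarrow> g t - g y \<le> e * (t - y))"
      by metis
    have gauge: "gauge (\<lambda>t. ball t (r t))" using r by (intro gauge_ball_dependent) auto
    obtain p where p: "p tagged_division_of {c..d}" "(\<lambda>t. ball t (r t)) fine p"
      using fine_division_exists_real[OF gauge] by blast
    have fin: "finite p" using p(1) by blast
    have pK: "\<exists>u v. K = {u..v} \<and> u \<le> x \<and> x \<le> v \<and> c \<le> u \<and> v \<le> d \<and> K \<subseteq> ball x (r x)"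
      if xK0: "(x, K) \<in> p" for x K
    proof -
      obtain u v where K: "K = cbox u v" using tagged_division_ofD(4)[OF p(1) xK0] by blast
      have "x \<in> K" "K \<subseteq> {c..d}" using tagged_division_ofD(2,3)[OF p(1) xK0] by auto
      moreover have "K \<subseteq> ball x (r x)" using p(2) xK0 unfolding fine_def by blast
      ultimately show ?thesis using K by (intro exI[of _ u] exI[of _ v]) auto
    qed
    define F where "F = (\<lambda>(x::real, K::real set). \<bar>g (Sup K) - g (Inf K)\<bar>)"
    have sum_g: "(\<Sum>(x,K)\<in>p. g (Sup K) - g (Inf K)) = g d - g c"
      by (rule additive_tagged_division_1[OF cd p(1)])
    have sum_id: "(\<Sum>(x,K)\<in>p. Sup K - Inf K) = d - c"
      using additive_tagged_division_1[OF cd p(1), of "\<lambda>x. x"] by simp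
    have termb: "g (Sup K) - g (Inf K) \<le> (if x \<in> G then F (x, K) else 0) + e * (Sup K - Inf K)"
      if xK: "(x, K) \<in> p" for x K
    proof -
      obtain u v where uv: "K = {u..v}" "u \<le> x" "x \<le> v" "c \<le> u" "v \<le> d" "K \<subseteq> ball x (r x)"
        using pK[OF xK] by blast
      have SI: "Sup K = v" "Inf K = u" using uv by auto
      show ?thesis
      proof (cases "x \<in> G")
        case True
        have "0 \<le> e * (v - u)" using uv e by simp
        moreover have "g v - g u \<le> \<bar>g v - g u\<bar>" by simp
        ultimately show ?thesis using True unfolding F_def by (simp add: SI)
      next
        case False
        have "u \<in> {u..v}" "v \<in> {u..v}" using uv by auto
        then have "u \<in> ball x (r x)" "v \<in> ball x (r x)" using uv(6) uv(1) by blast+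
        then have "\<bar>u - x\<bar> < r x" "\<bar>v - x\<bar> < r x" by (auto simp: dist_real_def abs_minus_commute)
        then have "g v - g x \<le> e * (v - x)" "g x - g u \<le> e * (x - u)"
          using rD[of x v] rD[of x u] uv False cd by auto
        then show ?thesis using False unfolding SI by (simp add: algebra_simps)
      qed
    qed
    have "g d - g c \<le> (\<Sum>(x,K)\<in>p. (if x \<in> G then F (x, K) else 0) + e * (Sup K - Inf K))"
      unfolding sum_g[symmetric] by (rule sum_mono) (use termb in auto)
    also have "\<dots> = (\<Sum>xK\<in>p. if fst xK \<in> G then F xK else 0) + e * (d - c)"
      unfolding sum_id[symmetric] sum_distrib_left sum.distrib[symmetric]
      by (rule sum.cong) (auto simp: case_prod_beta)
    also have "(\<Sum>xK\<in>p. if fst xK \<in> G then F xK else 0) = (\<Sum>xK\<in>{xK\<in>p. fst xK \<in> G}. F xK)"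
      by (rule sum.inter_filter[symmetric, OF fin])
    also have "(\<Sum>xK\<in>{xK\<in>p. fst xK \<in> G}. F xK) < e"
    proof -
      define p1 where "p1 = {xK\<in>p. fst xK \<in> G}"
      have fin1: "finite p1" using fin unfolding p1_def by simp
      obtain h where h: "bij_betw h {0..<card p1} p1" using ex_bij_betw_nat_finite[OF fin1] by blast
      define n where "n = card p1"
      define a where "a i = Inf (snd (h i))" for i
      define b where "b i = Sup (snd (h i))" for i
      have hp: "h i \<in> p" "fst (h i) \<in> G" if "i < n" for i
        using h that unfolding n_def p1_def bij_betw_def by auto
      have hK: "snd (h i) = {a i..b i} \<and> a i \<le> fst (h i) \<and> fst (h i) \<le> b i \<and> c \<le> a i \<and> b i \<le> d
          \<and> snd (h i) \<subseteq> ball (fst (h i)) (r (fst (h i)))" if iN: "i < n" for i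
      proof -
        obtain x K where xK: "h i = (x, K)" by fastforce
        obtain u v where uv: "K = {u..v}" "u \<le> x" "x \<le> v" "c \<le> u" "v \<le> d" "K \<subseteq> ball x (r x)"
          using pK[of x K] hp(1)[OF iN] xK by auto
        then show ?thesis unfolding a_def b_def using xK by auto
      qed
      have c1: "\<forall>i<n. a i \<le> b i \<and> a i \<in> {c..d} \<and> b i \<in> {c..d}"
        using hK by force
      have c2: "\<forall>i<n. \<forall>j<n. i \<noteq> j \<longrightarrow> {a i<..<b i} \<inter> {a j<..<b j} = {}"
      proof (intro allI impI)
        fix i j assume ij: "i < n" "j < n" "i \<noteq> j"
        have "h i \<noteq> h j" using h ij unfolding bij_betw_def inj_on_def n_def by auto
        then have "interior (snd (h i)) \<inter> interior (snd (h j)) = {}"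
          using tagged_division_ofD(5)[OF p(1), of "fst (h i)" "snd (h i)" "fst (h j)" "snd (h j)"]
            hp(1)[OF ij(1)] hp(1)[OF ij(2)] by auto
        then show "{a i<..<b i} \<inter> {a j<..<b j} = {}" using hK[OF ij(1)] hK[OF ij(2)] by simp
      qed
      have "(\<Sum>i<n. b i - a i) = (\<Sum>i<n. measure lebesgue {a i<..<b i})"
        using c1 by (intro sum.cong) auto
      also have "\<dots> = measure lebesgue (\<Union>i<n. {a i<..<b i})"
        using c1 c2 by (intro measure_finite_Union[symmetric]) (auto simp: disjoint_family_on_def)
      also have "\<dots> \<le> measure lebesgue G"
      proof (rule measure_mono_fmeasurable[OF _ _ Gf])
        show "(\<Union>i<n. {a i<..<b i}) \<subseteq> G"
        proof clarify
          fix i t assume "i < n" "t \<in> {a i<..<b i}"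
          then have "t \<in> {a i..b i}" by auto
          then have "t \<in> ball (fst (h i)) (r (fst (h i)))" using hK[OF \<open>i < n\<close>] by blast
          then show "t \<in> G" using rG[OF hp(2)[OF \<open>i < n\<close>]] by blast
        qed
      qed auto
      finally have c3: "(\<Sum>i<n. b i - a i) < \<delta>" using Gm by linarith
      have "(\<Sum>i<n. \<bar>g (b i) - g (a i)\<bar>) < e" by (rule Hac[OF c1 c2 c3])
      moreover have "(\<Sum>i<n. \<bar>g (b i) - g (a i)\<bar>) = (\<Sum>i\<in>{0..<card p1}. F (h i))"
        unfolding n_def F_def a_def b_def by (intro sum.cong) (auto simp: case_prod_beta)
      moreover have "(\<Sum>i\<in>{0..<card p1}. F (h i)) = (\<Sum>xK\<in>p1. F xK)"
        by (rule sum.reindex_bij_betw[OF h])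
      ultimately show ?thesis unfolding p1_def by simp
    qed
    finally show ?thesis by simp
  qed
  show ?thesis
  proof (rule field_le_epsilon)
    fix e :: real assume e: "e > 0"
    have "g d - g c \<le> (e / (d - c + 1)) * (d - c) + e / (d - c + 1)"
      using key[of "e / (d - c + 1)"] e cd by simp
    also have "\<dots> = e / (d - c + 1) * (d - c + 1)" by (simp add: distrib_left)
    also have "\<dots> = e" using cd by simp
    finally show "g d \<le> g c + e" by simp
  qed
qed

lemma exp_lip:
  fixes K c d :: real
  assumes x: "x \<in> {c..d}" and y: "y \<in> {c..d}"
  shows "\<bar>exp (- K * y) - exp (- K * x)\<bar> \<le> (\<bar>K\<bar> * exp (\<bar>K\<bar> * (\<bar>c\<bar> + \<bar>d\<bar>))) * \<bar>y - x\<bar>"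
proof -
  define L where "L = \<bar>K\<bar> * exp (\<bar>K\<bar> * (\<bar>c\<bar> + \<bar>d\<bar>))"
  have main: "\<bar>exp (- K * v) - exp (- K * u)\<bar> \<le> L * (v - u)"
    if uv: "u \<in> {c..d}" "v \<in> {c..d}" "u < v" for u v
  proof -
    have "\<And>t. u \<le> t \<Longrightarrow> t \<le> v \<Longrightarrow> ((\<lambda>t. exp (- K * t)) has_real_derivative exp (- K * t) * (- K)) (at t)"
      by (auto intro!: derivative_eq_intros)
    then obtain z where z: "u < z" "z < v" "exp (- K * v) - exp (- K * u) = (v - u) * (exp (- K * z) * (- K))"
      using MVT2[OF uv(3), of "\<lambda>t. exp (- K * t)" "\<lambda>t. exp (- K * t) * (- K)"] by blast
    have zb: "\<bar>z\<bar> \<le> \<bar>c\<bar> + \<bar>d\<bar>" using z uv by auto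
    have "- K * z \<le> \<bar>- K * z\<bar>" by (rule abs_ge_self)
    also have "\<dots> = \<bar>K\<bar> * \<bar>z\<bar>" by (simp add: abs_mult)
    also have "\<dots> \<le> \<bar>K\<bar> * (\<bar>c\<bar> + \<bar>d\<bar>)" using zb by (simp add: mult_left_mono)
    finally have "exp (- K * z) \<le> exp (\<bar>K\<bar> * (\<bar>c\<bar> + \<bar>d\<bar>))" by simp
    then have "exp (- K * z) * \<bar>K\<bar> \<le> L" unfolding L_def by (simp add: mult.commute mult_left_mono)
    moreover have "\<bar>exp (- K * v) - exp (- K * u)\<bar> = (v - u) * (exp (- K * z) * \<bar>K\<bar>)"
      using z uv by (simp add: abs_mult)
    ultimately show ?thesis using uv by (simp add: mult_left_mono mult.commute)
  qed
  show ?thesis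
  proof (cases x y rule: linorder_cases)
    case less then show ?thesis using main[OF x y] unfolding L_def[symmetric] by simp
  next
    case equal then show ?thesis by simp
  next
    case greater then show ?thesis using main[OF y x] unfolding L_def[symmetric]
      by (simp add: abs_minus_commute)
  qed
qed

lemma ac_exp: "abs_cont_on {c..d} (\<lambda>t. exp (- K * t))"
  by (rule ac_lip[OF exp_lip])

lemma gronwall:
  fixes V :: "real \<Rightarrow> real"
  assumes cd: "c \<le> d" and ac: "abs_cont_on {c..d} V"
    and ae: "AE t in lebesgue. t \<in> {c..d} \<longrightarrow>
      (\<exists>D. (V has_real_derivative D) (at t within {c..d}) \<and> D \<le> K * V t)"
    and V0: "V c = 0"
  shows "V d \<le> 0"
proof -
  define W where "W t = exp (- K * t) * V t" for t
  have acW: "abs_cont_on {c..d} W"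
    unfolding W_def by (rule ac_mult[OF ac_exp ac]) simp
  have "AE t in lebesgue. t \<in> {c..d} \<longrightarrow>
      (\<exists>D. (W has_real_derivative D) (at t within {c..d}) \<and> D \<le> 0)"
  proof (rule AE_mp[OF ae], rule AE_I2, intro impI)
    fix t assume elim: "t \<in> {c..d} \<longrightarrow>
      (\<exists>D. (V has_real_derivative D) (at t within {c..d}) \<and> D \<le> K * V t)" and t: "t \<in> {c..d}"
    then obtain D where D: "(V has_real_derivative D) (at t within {c..d})" "D \<le> K * V t"
      by blast
    have "(W has_real_derivative (exp (- K * t) * (- K) * V t + exp (- K * t) * D)) (at t within {c..d})"
      unfolding W_def by (auto intro!: derivative_eq_intros D(1))
    moreover have "exp (- K * t) * (- K) * V t + exp (- K * t) * D = exp (- K * t) * (D - K * V t)"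
      by (simp add: algebra_simps)
    moreover have "exp (- K * t) * (D - K * V t) \<le> 0"
      using D(2) by (simp add: mult_nonneg_nonpos)
    ultimately show "\<exists>D. (W has_real_derivative D) (at t within {c..d}) \<and> D \<le> 0" by metis
  qed
  then have "W d \<le> W c" by (rule ac_mono[OF cd acW])
  then have "exp (- K * d) * V d \<le> 0" unfolding W_def using V0 by simp
  then show ?thesis by (simp add: mult_le_0_iff)
qed

lemma ae_ex:
  fixes a b :: real
  assumes ab: "a < b" and ae: "AE t in lebesgue. t \<in> {a<..<b} \<longrightarrow> P t"
  shows "\<exists>t\<in>{a<..<b}. P t"
proof (rule ccontr)
  assume "\<not> (\<exists>t\<in>{a<..<b}. P t)"
  then have nP: "\<And>t. t \<in> {a<..<b} \<Longrightarrow> \<not> P t" by blast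
  from ae obtain N where N: "{t \<in> space lebesgue. \<not> (t \<in> {a<..<b} \<longrightarrow> P t)} \<subseteq> N"
    "emeasure lebesgue N = 0" "N \<in> sets lebesgue" by (rule AE_E)
  have "{a<..<b} \<subseteq> N" using N(1) nP by auto
  then have "emeasure lebesgue {a<..<b} \<le> emeasure lebesgue N" by (rule emeasure_mono) (rule N(3))
  then show False using N(2) ab by simp
qed

lemma ae_cont_zero:
  fixes a b :: real and f :: "real \<Rightarrow> real"
  assumes cont: "continuous_on {a<..<b} f"
    and ae: "AE t in lebesgue. t \<in> {a<..<b} \<longrightarrow> f t = 0"
  shows "\<forall>t\<in>{a<..<b}. f t = 0"
proof (rule ccontr)
  assume "\<not> (\<forall>t\<in>{a<..<b}. f t = 0)"
  then obtain t where t: "t \<in> {a<..<b}" "f t \<noteq> 0" by blast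
  have "\<forall>e>0. \<exists>d>0. \<forall>y\<in>{a<..<b}. dist y t < d \<longrightarrow> dist (f y) (f t) < e"
    using bspec[OF cont[unfolded continuous_on_iff] t(1)] .
  moreover have ft: "\<bar>f t\<bar> > 0" using t(2) by simp
  ultimately obtain r where r: "r > 0" and hr: "\<And>y. y \<in> {a<..<b} \<Longrightarrow> dist y t < r \<Longrightarrow> dist (f y) (f t) < \<bar>f t\<bar>"
    by (meson ft)
  define a' where "a' = max a (t - r)"
  define b' where "b' = min b (t + r)"
  have ab': "a' < b'" using t r unfolding a'_def b'_def by auto
  have sub: "\<And>x. x \<in> {a'<..<b'} \<Longrightarrow> x \<in> {a<..<b}" unfolding a'_def b'_def by auto
  have "AE t in lebesgue. t \<in> {a'<..<b'} \<longrightarrow> f t = 0"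
    by (rule AE_mp[OF ae], rule AE_I2) (use sub in blast)
  from ae_ex[OF ab' this] obtain y where y: "y \<in> {a'<..<b'}" "f y = 0" by blast
  have "dist y t < r" using y unfolding a'_def b'_def by (auto simp: dist_real_def)
  then have "dist (f y) (f t) < \<bar>f t\<bar>" using hr[OF sub[OF y(1)]] by blast
  then show False using y by (simp add: dist_real_def)
qed

lemma deriv_const_zero:
  fixes f :: "real \<Rightarrow> real"
  assumes t: "t \<in> {a<..<b}" and sub: "{a<..<b} \<subseteq> S"
    and const: "\<And>y. y \<in> {a<..<b} \<Longrightarrow> f y = C"
    and D: "(f has_real_derivative D) (at t within S)"
  shows "D = 0"
proof -
  have "{a<..<b} \<subseteq> interior S" by (rule interior_maximal[OF sub]) simp
  then have "t \<in> interior S" using t by blast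
  have D': "(f has_real_derivative D) (at t)" using D[unfolded at_within_interior[OF \<open>t \<in> interior S\<close>]] .
  have "((\<lambda>_. C) has_real_derivative 0) (at t)" by simp
  then have "(f has_real_derivative 0) (at t)"
    by (rule has_field_derivative_transform_within_open[where S="{a<..<b}"]) (use t const in auto)
  then show ?thesis using DERIV_unique[OF D'] by blast
qed

lemma tb:
  fixes a x y M :: real
  assumes "\<bar>a\<bar> \<le> M"
  shows "a * x * y \<le> M * (x * x) + M * (y * y)"
proof -
  have M: "M \<ge> 0" using assms abs_ge_zero order_trans by blast
  have "a * x * y \<le> \<bar>a * x * y\<bar>" by (rule abs_ge_self)
  also have "\<dots> = \<bar>a\<bar> * \<bar>x * y\<bar>" by (simp add: abs_mult)
  also have "\<dots> \<le> M * \<bar>x * y\<bar>" using assms by (simp add: mult_right_mono)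
  also have "\<bar>x * y\<bar> \<le> x * x + y * y"
  proof -
    have "0 \<le> (\<bar>x\<bar> - \<bar>y\<bar>) * (\<bar>x\<bar> - \<bar>y\<bar>)" by simp
    then have "2 * (\<bar>x\<bar> * \<bar>y\<bar>) \<le> \<bar>x\<bar> * \<bar>x\<bar> + \<bar>y\<bar> * \<bar>y\<bar>" by (simp add: algebra_simps)
    moreover have "\<bar>x\<bar> * \<bar>x\<bar> = x * x" "\<bar>y\<bar> * \<bar>y\<bar> = y * y" by (simp_all add: abs_mult[symmetric])
    moreover have "0 \<le> \<bar>x\<bar> * \<bar>y\<bar>" by simp
    ultimately show ?thesis unfolding abs_mult by linarith
  qed
  then have "M * \<bar>x * y\<bar> \<le> M * (x * x + y * y)" using M by (rule mult_left_mono)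
  finally show ?thesis by (simp add: distrib_left)
qed

lemma lin7:
  fixes x1 x2 x3 x4 x5 x6 x7 A B C :: real
  assumes "x1 \<le> A + A" "x2 \<le> A + B" "x3 \<le> B + B" "x4 \<le> B + C" "x5 \<le> C + A"
    "x6 \<le> C + B" "x7 \<le> C + C" "0 \<le> A" "0 \<le> B" "0 \<le> C"
  shows "2 * (x1 + x2 + x3 + x4 + x5 + x6 + x7) \<le> 28 * A + 28 * B + 28 * C"
  using assms by (simp only: distrib_left)

lemma ac_neg: "abs_cont_on D f \<Longrightarrow> abs_cont_on D (\<lambda>t. - f t)"
  by (rule ac_comb[where f=f and g=f and M=1]) (auto simp: abs_minus_commute)

lemma ac_const_deriv:
  fixes f :: "real \<Rightarrow> real"
  assumes cd: "c \<le> d" and ac: "abs_cont_on {c..d} f"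
    and ae: "AE t in lebesgue. t \<in> {c..d} \<longrightarrow> (f has_real_derivative 0) (at t within {c..d})"
  shows "f d = f c"
proof -
  have "f d \<le> f c"
    by (rule ac_mono[OF cd ac], rule AE_mp[OF ae], rule AE_I2) auto
  moreover have "(\<lambda>t. - f t) d \<le> (\<lambda>t. - f t) c"
  proof (rule ac_mono[OF cd ac_neg[OF ac]],
      rule AE_mp[OF ae], rule AE_I2, intro impI)
    fix t assume "t \<in> {c..d} \<longrightarrow> (f has_real_derivative 0) (at t within {c..d})" "t \<in> {c..d}"
    then have "((\<lambda>t. - f t) has_real_derivative - 0) (at t within {c..d})"
      by (intro DERIV_minus) auto
    then show "\<exists>D. ((\<lambda>t. - f t) has_real_derivative D) (at t within {c..d}) \<and> D \<le> 0" by auto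
  qed
  ultimately show ?thesis by simp
qed

theorem proposition3:
  fixes \<eta> \<beta>min \<beta>max \<gamma>min \<gamma>max Imax t0 tbar :: real
    and \<beta> \<gamma> S E I lam1 lam2 lam3 :: "real \<Rightarrow> real"
  assumes params: "\<eta> > 0" "0 < \<beta>min" "\<beta>min \<le> \<beta>max" "0 < \<gamma>min" "\<gamma>min \<le> \<gamma>max"
      "0 < Imax" "Imax \<le> 1"
    and time: "t0 \<le> tbar"
    and inputs_meas: "\<beta> \<in> borel_measurable lebesgue" "\<gamma> \<in> borel_measurable lebesgue"
    and inputs_bds: "\<And>t. t \<ge> t0 \<Longrightarrow> \<beta> t \<in> {\<beta>min..\<beta>max}"
      "\<And>t. t \<ge> t0 \<Longrightarrow> \<gamma> t \<in> {\<gamma>min..\<gamma>max}"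
    and state_ac: "abs_cont_on {t0..tbar} S" "abs_cont_on {t0..tbar} E" "abs_cont_on {t0..tbar} I"
    and state_ode: "AE t in lebesgue. t \<in> {t0..tbar} \<longrightarrow>
         (S has_real_derivative (- \<beta> t * S t * I t)) (at t within {t0..tbar}) \<and>
         (E has_real_derivative (\<beta> t * S t * I t - \<eta> * E t)) (at t within {t0..tbar}) \<and>
         (I has_real_derivative (\<eta> * E t - \<gamma> t * I t)) (at t within {t0..tbar})"
    and constraint: "\<And>t. t \<in> {t0..tbar} \<Longrightarrow> I t - Imax \<le> 0"
    and adj_ac: "abs_cont_on {t0..tbar} lam1" "abs_cont_on {t0..tbar} lam2" "abs_cont_on {t0..tbar} lam3"
    and adj_ode: "AE t in lebesgue. t \<in> {t0..tbar} \<longrightarrow>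
         (lam1 has_real_derivative (\<beta> t * I t * lam1 t - \<beta> t * I t * lam2 t)) (at t within {t0..tbar}) \<and>
         (lam2 has_real_derivative (\<eta> * lam2 t - \<eta> * lam3 t)) (at t within {t0..tbar}) \<and>
         (lam3 has_real_derivative (\<beta> t * S t * lam1 t - \<beta> t * S t * lam2 t + \<gamma> t * lam3 t))
            (at t within {t0..tbar})"
    and adj_nonzero: "\<exists>t\<in>{t0..tbar}. (lam1 t, lam2 t, lam3 t) \<noteq> (0, 0, 0)"
    and adj_final: "lam1 tbar = 0" "lam2 tbar = 0" "lam3 tbar = 1"
    and beta_rule: "AE t in lebesgue. t \<in> {t0..tbar} \<longrightarrow>
         (lam2 t - lam1 t < 0 \<longrightarrow> \<beta> t = \<beta>max) \<and> (lam2 t - lam1 t > 0 \<longrightarrow> \<beta> t = \<beta>min)"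
    and gamma_rule: "AE t in lebesgue. t \<in> {t0..tbar} \<longrightarrow>
         (lam3 t > 0 \<longrightarrow> \<gamma> t = \<gamma>max) \<and> (lam3 t < 0 \<longrightarrow> \<gamma> t = \<gamma>min)"
    and endpoint: "(S tbar, E tbar, I tbar) \<in> tangent_set \<eta> \<gamma>max Imax"
    and z1_nonzero: "S tbar \<noteq> 0"
  shows "\<forall>a b. a < b \<and> {a<..<b} \<subseteq> {t0..tbar} \<longrightarrow>
           (\<exists>t\<in>{a<..<b}. lam2 t - lam1 t \<noteq> 0) \<and> (\<exists>t\<in>{a<..<b}. lam3 t \<noteq> 0)"
proof -
  let ?D = "{t0..tbar}"
  have cpt: "compact ?D" by simp
  obtain MS where MS: "MS > 0" "\<And>x. x \<in> ?D \<Longrightarrow> \<bar>S x\<bar> \<le> MS"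
    using ac_bounded[OF state_ac(1) cpt] by blast
  obtain MI where MI: "MI > 0" "\<And>x. x \<in> ?D \<Longrightarrow> \<bar>I x\<bar> \<le> MI"
    using ac_bounded[OF state_ac(3) cpt] by blast
  define B where "B = \<beta>max + \<gamma>max + \<eta> + MS + MI + 1"
  define M where "M = B * B"
  have B1: "B \<ge> 1" unfolding B_def using params MS MI by linarith
  have MB: "B \<le> M" unfolding M_def using B1 by (metis mult_le_cancel_left1 order.trans zero_le_one linorder_not_le less_le_trans mult.commute)
  have Bbeta: "\<bar>\<beta> t\<bar> \<le> B" if "t \<in> ?D" for t
    using inputs_bds(1)[of t] that params MS MI unfolding B_def by auto
  have Bgamma: "\<bar>\<gamma> t\<bar> \<le> B" if "t \<in> ?D" for t
    using inputs_bds(2)[of t] that params MS MI unfolding B_def by auto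
  have BS: "\<bar>S t\<bar> \<le> B" if "t \<in> ?D" for t
    using MS(2)[OF that] params MI unfolding B_def by auto
  have BI: "\<bar>I t\<bar> \<le> B" if "t \<in> ?D" for t
    using MI(2)[OF that] params MS unfolding B_def by auto
  have Meta: "\<bar>\<eta>\<bar> \<le> M" using params MS MI MB unfolding B_def by auto
  have Mgamma: "\<bar>\<gamma> t\<bar> \<le> M" if "t \<in> ?D" for t using Bgamma[OF that] MB by linarith
  have MbI: "\<bar>\<beta> t * I t\<bar> \<le> M" if "t \<in> ?D" for t
    unfolding M_def abs_mult using Bbeta[OF that] BI[OF that] by (intro mult_mono) auto
  have MbS: "\<bar>\<beta> t * S t\<bar> \<le> M" if "t \<in> ?D" for t
    unfolding M_def abs_mult using Bbeta[OF that] BS[OF that] by (intro mult_mono) auto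
  have M0: "M \<ge> 0" using MB B1 by linarith

  have Snz: "S c \<noteq> 0" if c: "c \<in> ?D" for c
  proof
    assume S0: "S c = 0"
    have sub: "{c..tbar} \<subseteq> ?D" using c by auto
    define V where "V t = S t * S t" for t
    have acV: "abs_cont_on {c..tbar} V"
      unfolding V_def by (rule ac_mult) (use ac_subset[OF state_ac(1) sub] in auto)
    have "AE t in lebesgue. t \<in> {c..tbar} \<longrightarrow>
      (\<exists>D. (V has_real_derivative D) (at t within {c..tbar}) \<and> D \<le> (2 * M) * V t)"
    proof (rule AE_mp[OF state_ode], rule AE_I2, intro impI)
      fix t assume H: "t \<in> ?D \<longrightarrow>
         (S has_real_derivative (- \<beta> t * S t * I t)) (at t within ?D) \<and>
         (E has_real_derivative (\<beta> t * S t * I t - \<eta> * E t)) (at t within ?D) \<and>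
         (I has_real_derivative (\<eta> * E t - \<gamma> t * I t)) (at t within ?D)"
        and t: "t \<in> {c..tbar}"
      have tD: "t \<in> ?D" using t sub by auto
      have dS: "(S has_real_derivative (- \<beta> t * S t * I t)) (at t within {c..tbar})"
        using H tD DERIV_subset[OF _ sub] by blast
      have "(V has_real_derivative (S t * (- \<beta> t * S t * I t) + (- \<beta> t * S t * I t) * S t)) (at t within {c..tbar})"
        unfolding V_def by (rule DERIV_mult'[OF dS dS])
      moreover have "S t * (- \<beta> t * S t * I t) + (- \<beta> t * S t * I t) * S t
          = 2 * (- (\<beta> t * I t)) * (S t * S t)" by (simp add: algebra_simps)
      moreover have "2 * (- (\<beta> t * I t)) * (S t * S t) \<le> (2 * M) * V t"
      proof -
        have "- (\<beta> t * I t) \<le> M" using MbI[OF tD] by linarith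
        then show ?thesis unfolding V_def by (intro mult_right_mono) (auto simp: mult.commute)
      qed
      ultimately show "\<exists>D. (V has_real_derivative D) (at t within {c..tbar}) \<and> D \<le> (2 * M) * V t"
        by metis
    qed
    from gronwall[OF _ acV this] have "V tbar \<le> 0" using c S0 unfolding V_def by auto
    then have "S tbar * S tbar \<le> 0" unfolding V_def .
    then have "S tbar = 0" by (metis mult_le_0_iff order_antisym_conv)
    then show False using z1_nonzero by simp
  qed

  have lamnz: False if c: "c \<in> ?D" "lam1 c = 0" "lam2 c = 0" "lam3 c = 0" for c
  proof -
    have sub: "{c..tbar} \<subseteq> ?D" using c by auto
    define V where "V t = lam1 t * lam1 t + lam2 t * lam2 t + lam3 t * lam3 t" for t
    have ac1: "abs_cont_on {c..tbar} lam1" "abs_cont_on {c..tbar} lam2" "abs_cont_on {c..tbar} lam3"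
      using ac_subset[OF adj_ac(1) sub] ac_subset[OF adj_ac(2) sub] ac_subset[OF adj_ac(3) sub] by auto
    have acV: "abs_cont_on {c..tbar} V"
      unfolding V_def by (intro ac_add ac_mult ac1) auto
    have "AE t in lebesgue. t \<in> {c..tbar} \<longrightarrow>
      (\<exists>D. (V has_real_derivative D) (at t within {c..tbar}) \<and> D \<le> (28 * M) * V t)"
    proof (rule AE_mp[OF adj_ode], rule AE_I2, intro impI)
      fix t assume H: "t \<in> ?D \<longrightarrow>
         (lam1 has_real_derivative (\<beta> t * I t * lam1 t - \<beta> t * I t * lam2 t)) (at t within ?D) \<and>
         (lam2 has_real_derivative (\<eta> * lam2 t - \<eta> * lam3 t)) (at t within ?D) \<and>
         (lam3 has_real_derivative (\<beta> t * S t * lam1 t - \<beta> t * S t * lam2 t + \<gamma> t * lam3 t))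
            (at t within ?D)"
        and t: "t \<in> {c..tbar}"
      have tD: "t \<in> ?D" using t sub by auto
      define p where "p = \<beta> t * I t"
      define s where "s = \<beta> t * S t"
      define g where "g = \<gamma> t"
      define l1 where "l1 = lam1 t"
      define l2 where "l2 = lam2 t"
      define l3 where "l3 = lam3 t"
      have d1: "(lam1 has_real_derivative (p * l1 - p * l2)) (at t within {c..tbar})"
        using H tD DERIV_subset[OF _ sub] unfolding p_def l1_def l2_def by blast
      have d2: "(lam2 has_real_derivative (\<eta> * l2 - \<eta> * l3)) (at t within {c..tbar})"
        using H tD DERIV_subset[OF _ sub] unfolding l2_def l3_def by blast
      have d3: "(lam3 has_real_derivative (s * l1 - s * l2 + g * l3)) (at t within {c..tbar})"
        using H tD DERIV_subset[OF _ sub] unfolding s_def g_def l1_def l2_def l3_def by blast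
      have "(V has_real_derivative
          ((l1 * (p * l1 - p * l2) + (p * l1 - p * l2) * l1) +
           (l2 * (\<eta> * l2 - \<eta> * l3) + (\<eta> * l2 - \<eta> * l3) * l2)) +
           (l3 * (s * l1 - s * l2 + g * l3) + (s * l1 - s * l2 + g * l3) * l3))
          (at t within {c..tbar})"
        unfolding V_def l1_def l2_def l3_def
        by (intro DERIV_add DERIV_mult' d1[unfolded l1_def l2_def l3_def]
            d2[unfolded l1_def l2_def l3_def] d3[unfolded l1_def l2_def l3_def])
      moreover have "((l1 * (p * l1 - p * l2) + (p * l1 - p * l2) * l1) +
           (l2 * (\<eta> * l2 - \<eta> * l3) + (\<eta> * l2 - \<eta> * l3) * l2)) +
           (l3 * (s * l1 - s * l2 + g * l3) + (s * l1 - s * l2 + g * l3) * l3)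
          = 2 * (p * l1 * l1 + (- p) * l1 * l2 + \<eta> * l2 * l2 + (- \<eta>) * l2 * l3
              + s * l3 * l1 + (- s) * l3 * l2 + g * l3 * l3)"
        by (simp add: algebra_simps)
      moreover have "2 * (p * l1 * l1 + (- p) * l1 * l2 + \<eta> * l2 * l2 + (- \<eta>) * l2 * l3
              + s * l3 * l1 + (- s) * l3 * l2 + g * l3 * l3) \<le> (28 * M) * V t"
      proof -
        have Mp: "\<bar>p\<bar> \<le> M" "\<bar>- p\<bar> \<le> M" using MbI[OF tD] unfolding p_def by auto
        have Ms: "\<bar>s\<bar> \<le> M" "\<bar>- s\<bar> \<le> M" using MbS[OF tD] unfolding s_def by auto
        have Mg: "\<bar>g\<bar> \<le> M" using Mgamma[OF tD] unfolding g_def by auto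
        have Me: "\<bar>- \<eta>\<bar> \<le> M" using Meta by simp
        have nn: "0 \<le> M * (l1 * l1)" "0 \<le> M * (l2 * l2)" "0 \<le> M * (l3 * l3)"
          using M0 by simp_all
        have VV: "(28 * M) * V t = 28 * (M * (l1 * l1)) + 28 * (M * (l2 * l2)) + 28 * (M * (l3 * l3))"
          unfolding V_def l1_def l2_def l3_def by (simp add: algebra_simps)
        show ?thesis unfolding VV
          by (rule lin7[OF tb[OF Mp(1), of l1 l1] tb[OF Mp(2), of l1 l2] tb[OF Meta, of l2 l2]
            tb[OF Me, of l2 l3] tb[OF Ms(1), of l3 l1] tb[OF Ms(2), of l3 l2] tb[OF Mg, of l3 l3]
            nn])
      qed
      ultimately show "\<exists>D. (V has_real_derivative D) (at t within {c..tbar}) \<and> D \<le> (28 * M) * V t"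
        by metis
    qed
    from gronwall[OF _ acV this] have "V tbar \<le> 0" using c unfolding V_def by auto
    then show False using adj_final unfolding V_def by simp
  qed

  have contl: "continuous_on ?D lam1" "continuous_on ?D lam2" "continuous_on ?D lam3"
    using ac_cont adj_ac by blast+

  have mu_case: False
    if ab: "a < b" "{a<..<b} \<subseteq> ?D" and mu0: "\<forall>t\<in>{a<..<b}. lam2 t - lam1 t = 0" for a b
  proof -
    have l1eq: "lam1 y = lam1 x" if xy: "x \<in> {a<..<b}" "y \<in> {a<..<b}" "x \<le> y" for x y
    proof -
      have sub: "{x..y} \<subseteq> {a<..<b}" using xy by auto
      have subD: "{x..y} \<subseteq> ?D" using sub ab(2) by blast
      show ?thesis
      proof (rule ac_const_deriv[OF xy(3) ac_subset[OF adj_ac(1) subD]],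
          rule AE_mp[OF adj_ode], rule AE_I2, intro impI)
        fix t assume H: "t \<in> ?D \<longrightarrow>
         (lam1 has_real_derivative (\<beta> t * I t * lam1 t - \<beta> t * I t * lam2 t)) (at t within ?D) \<and>
         (lam2 has_real_derivative (\<eta> * lam2 t - \<eta> * lam3 t)) (at t within ?D) \<and>
         (lam3 has_real_derivative (\<beta> t * S t * lam1 t - \<beta> t * S t * lam2 t + \<gamma> t * lam3 t))
            (at t within ?D)"
          and t: "t \<in> {x..y}"
        have tD: "t \<in> ?D" using t subD by blast
        have "lam2 t = lam1 t" using mu0 t sub by auto
        then have "\<beta> t * I t * lam1 t - \<beta> t * I t * lam2 t = 0" by simp
        then show "(lam1 has_real_derivative 0) (at t within {x..y})"
          using H tD DERIV_subset[OF _ subD] by metis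
      qed
    qed
    define m where "m = (a + b) / 2"
    have m: "m \<in> {a<..<b}" using ab unfolding m_def by auto
    define C where "C = lam1 m"
    have l1C: "lam1 t = C" if "t \<in> {a<..<b}" for t
      using l1eq[OF m that] l1eq[OF that m] unfolding C_def by (cases "m \<le> t") auto
    have l2C: "lam2 t = C" if "t \<in> {a<..<b}" for t
      using l1C[OF that] mu0 that by auto
    have "AE t in lebesgue. t \<in> {a<..<b} \<longrightarrow> lam3 t - C = 0"
    proof (rule AE_mp[OF adj_ode], rule AE_I2, intro impI)
      fix t assume H: "t \<in> ?D \<longrightarrow>
         (lam1 has_real_derivative (\<beta> t * I t * lam1 t - \<beta> t * I t * lam2 t)) (at t within ?D) \<and>
         (lam2 has_real_derivative (\<eta> * lam2 t - \<eta> * lam3 t)) (at t within ?D) \<and>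
         (lam3 has_real_derivative (\<beta> t * S t * lam1 t - \<beta> t * S t * lam2 t + \<gamma> t * lam3 t))
            (at t within ?D)"
        and t: "t \<in> {a<..<b}"
      have tD: "t \<in> ?D" using t ab(2) by blast
      have "\<eta> * lam2 t - \<eta> * lam3 t = 0"
        by (rule deriv_const_zero[OF t ab(2) l2C mp[OF H tD, THEN conjunct2, THEN conjunct1]])
      then have "\<eta> * (lam2 t - lam3 t) = 0" by (simp add: algebra_simps)
      then show "lam3 t - C = 0" using params(1) l2C[OF t] by simp
    qed
    moreover have "continuous_on {a<..<b} (\<lambda>t. lam3 t - C)"
      by (intro continuous_intros continuous_on_subset[OF contl(3) ab(2)])
    ultimately have l3C': "\<forall>t\<in>{a<..<b}. lam3 t - C = 0" using ae_cont_zero by blast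
    have l3C: "lam3 t = C" if "t \<in> {a<..<b}" for t using l3C' that by auto
    have "AE t in lebesgue. t \<in> {a<..<b} \<longrightarrow> \<gamma> t * C = 0"
    proof (rule AE_mp[OF adj_ode], rule AE_I2, intro impI)
      fix t assume H: "t \<in> ?D \<longrightarrow>
         (lam1 has_real_derivative (\<beta> t * I t * lam1 t - \<beta> t * I t * lam2 t)) (at t within ?D) \<and>
         (lam2 has_real_derivative (\<eta> * lam2 t - \<eta> * lam3 t)) (at t within ?D) \<and>
         (lam3 has_real_derivative (\<beta> t * S t * lam1 t - \<beta> t * S t * lam2 t + \<gamma> t * lam3 t))
            (at t within ?D)"
        and t: "t \<in> {a<..<b}"
      have tD: "t \<in> ?D" using t ab(2) by blast
      have "\<beta> t * S t * lam1 t - \<beta> t * S t * lam2 t + \<gamma> t * lam3 t = 0"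
        by (rule deriv_const_zero[OF t ab(2) l3C mp[OF H tD, THEN conjunct2, THEN conjunct2]])
      then show "\<gamma> t * C = 0" using l1C[OF t] l2C[OF t] l3C[OF t] by simp
    qed
    from ae_ex[OF ab(1) this] obtain t where t: "t \<in> {a<..<b}" "\<gamma> t * C = 0" by blast
    have "\<gamma> t > 0" using inputs_bds(2)[of t] t(1) ab(2) params(4) by auto
    then have "C = 0" using t(2) by simp
    then show False using lamnz[of m] m ab(2) l1C[OF m] l2C[OF m] l3C[OF m] by auto
  qed

  have nu_case: False
    if ab: "a < b" "{a<..<b} \<subseteq> ?D" and nu0: "\<forall>t\<in>{a<..<b}. lam3 t = 0" for a b
  proof -
    have l3z: "lam3 t = 0" if "t \<in> {a<..<b}" for t using nu0 that by blast
    have "AE t in lebesgue. t \<in> {a<..<b} \<longrightarrow> lam2 t - lam1 t = 0"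
    proof (rule AE_mp[OF adj_ode], rule AE_I2, intro impI)
      fix t assume H: "t \<in> ?D \<longrightarrow>
         (lam1 has_real_derivative (\<beta> t * I t * lam1 t - \<beta> t * I t * lam2 t)) (at t within ?D) \<and>
         (lam2 has_real_derivative (\<eta> * lam2 t - \<eta> * lam3 t)) (at t within ?D) \<and>
         (lam3 has_real_derivative (\<beta> t * S t * lam1 t - \<beta> t * S t * lam2 t + \<gamma> t * lam3 t))
            (at t within ?D)"
        and t: "t \<in> {a<..<b}"
      have tD: "t \<in> ?D" using t ab(2) by blast
      have "\<beta> t * S t * lam1 t - \<beta> t * S t * lam2 t + \<gamma> t * lam3 t = 0"
        by (rule deriv_const_zero[OF t ab(2) l3z mp[OF H tD, THEN conjunct2, THEN conjunct2]])
      then have "(\<beta> t * S t) * (lam2 t - lam1 t) = 0" using l3z[OF t] by (auto simp: algebra_simps)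
      moreover have "\<beta> t > 0" using inputs_bds(1)[of t] tD params(2) by auto
      moreover have "S t \<noteq> 0" by (rule Snz[OF tD])
      ultimately show "lam2 t - lam1 t = 0" by simp
    qed
    moreover have "continuous_on {a<..<b} (\<lambda>t. lam2 t - lam1 t)"
      by (intro continuous_intros continuous_on_subset[OF contl(2) ab(2)] continuous_on_subset[OF contl(1) ab(2)])
    ultimately have "\<forall>t\<in>{a<..<b}. lam2 t - lam1 t = 0" using ae_cont_zero by blast
    then show False by (rule mu_case[OF ab])
  qed

  show ?thesis
  proof (intro allI impI conjI)
    fix a b assume ab: "a < b \<and> {a<..<b} \<subseteq> ?D"
    show "\<exists>t\<in>{a<..<b}. lam2 t - lam1 t \<noteq> 0"
      using mu_case[of a b] ab by blast
    show "\<exists>t\<in>{a<..<b}. lam3 t \<noteq> 0"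
      using nu_case[of a b] ab by blast
  qed
qed

thm_deps proposition3

end
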